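(* Let $\alpha,\beta,\gamma,\alpha',\gamma'\in\mathbb C$ and let $T_{n,k}=\left[\begin{array}{cc|c}\alpha,&\beta&\gamma\\ \alpha',&-\beta&\gamma'\end{array}\right]_{n,k}$ with row polynomials $G_n(t)$. Then for all $0\le k\le n$: (RT) $\left[\begin{array}{cc|c}\alpha'-\beta,&\beta&\gamma'\\ \alpha+\beta,&-\beta&\gamma\end{array}\right]_{n,k}=T_{n,n-k}$, equivalently the row polynomials of the left-hand triangle are $t^nG_n(1/t)$; (UBT) $\left[\begin{array}{cc|c}-\alpha-\alpha',&\beta&-\gamma-\gamma'\\ \alpha',&-\beta&\gamma'\end{array}\right]_{n,k}=(-1)^{n-k}\sum_{j=k}^n\binom jk T_{n,j}$, equivalently the row polynomials of the left-hand triangle are $(-1)^nG_n(1-t)$. In terms of EGFs, the RT triangle has EGF $G(1/t,tz)$ and the UBT triangle has EGF $G(1-t,-z)$, where $G$ is the EGF of $T$. The two transformations are involutions and generate a group of six transformations of GKP triangles with $\beta'=-\beta$ (preserving $\beta,\beta'$) isomorphic to the symmetric group $S_3$.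
   Context: GKP triangle: for complex parameters $\alpha,\beta,\gamma,\alpha',\beta',\gamma'$, the array $T_{n,k}=\left[\begin{array}{cc|c}\alpha,&\beta&\gamma\\ \alpha',&\beta'&\gamma'\end{array}\right]_{n,k}$ ($n,k\in\mathbb Z$) is defined by $T_{0,0}=1$, $T_{n,k}=0$ if $n<0$, $k<0$ or $k>n$, and $T_{n+1,k+1}=[\alpha n+\beta(k+1)+\gamma]\,T_{n,k+1}+[\alpha' n+\beta' k+\gamma']\,T_{n,k}$ for all $n\ge0$ and all integers $k$. Its $n$th row polynomial is $G_n(t)=\sum_{k=0}^n T_{n,k}t^k$ and its EGF is $G(t,z)=\sum_{n\ge0}G_n(t)\,z^n/n!$. *)

theory Defs
  imports Complex_Main "HOL-Computational_Algebra.Formal_Power_Series"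
    "HOL-Combinatorics.Permutations"
begin

fun gkp :: "complex \<Rightarrow> complex \<Rightarrow> complex \<Rightarrow> complex \<Rightarrow> complex \<Rightarrow> complex
              \<Rightarrow> nat \<Rightarrow> int \<Rightarrow> complex" where
  "gkp a b c a' b' c' 0 k = (if k = 0 then 1 else 0)"
| "gkp a b c a' b' c' (Suc n) k =
     (if k < 0 \<or> k > int (Suc n) then 0
      else (a * of_nat n + b * of_int k + c) * gkp a b c a' b' c' n k
         + (a' * of_nat n + b' * of_int (k - 1) + c') * gkp a b c a' b' c' n (k - 1))"

definition gkp_row :: "complex \<Rightarrow> complex \<Rightarrow> complex \<Rightarrow> complex \<Rightarrow> complex \<Rightarrow> complex
              \<Rightarrow> nat \<Rightarrow> complex \<Rightarrow> complex" where
  "gkp_row a b c a' b' c' n t = (\<Sum>k=0..n. gkp a b c a' b' c' n (int k) * t ^ k)"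

text \<open>EGF G(t,z) for fixed t, as a formal power series in z.\<close>
definition gkp_egf :: "complex \<Rightarrow> complex \<Rightarrow> complex \<Rightarrow> complex \<Rightarrow> complex \<Rightarrow> complex
              \<Rightarrow> complex \<Rightarrow> complex fps" where
  "gkp_egf a b c a' b' c' t = Abs_fps (\<lambda>n. gkp_row a b c a' b' c' n t / fact n)"

text \<open>The RT and UBT transformations on the parameters (alpha, beta, gamma, alpha', gamma')
  of a GKP triangle with beta' = -beta.\<close>
type_synonym params = "complex \<times> complex \<times> complex \<times> complex \<times> complex"

definition RT_map :: "params \<Rightarrow> params" where
  "RT_map = (\<lambda>(a, b, c, a', c'). (a' - b, b, c', a + b, c))"

definition UBT_map :: "params \<Rightarrow> params" where
  "UBT_map = (\<lambda>(a, b, c, a', c'). (- a - a', b, - c - c', a', c'))"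

inductive_set generated :: "('a \<Rightarrow> 'a) set \<Rightarrow> ('a \<Rightarrow> 'a) set" for S where
  gen_id: "id \<in> generated S"
| gen_comp: "f \<in> S \<Longrightarrow> g \<in> generated S \<Longrightarrow> f \<circ> g \<in> generated S"

end

theory Submission
  imports Defs "HOL-Computational_Algebra.Polynomial"
begin


lemma gkp_out: "k < 0 \<or> k > int n \<Longrightarrow> gkp a b c a' b' c' n k = 0"
  by (cases n) auto

lemma gkp_Suc': "gkp a b c a' b' c' (Suc n) k =
   (a * of_nat n + b * of_int k + c) * gkp a b c a' b' c' n k
 + (a' * of_nat n + b' * of_int (k - 1) + c') * gkp a b c a' b' c' n (k - 1)"
proof (cases "k < 0 \<or> k > int (Suc n)")
  case True
  then have "gkp a b c a' b' c' n k = 0" "gkp a b c a' b' c' n (k-1) = 0"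
    by (auto intro!: gkp_out)
  with True show ?thesis by simp
qed simp

definition gp where
  "gp a b c a' b' c' n = (\<Sum>k\<le>n. monom (gkp a b c a' b' c' n (int k)) k)"

lemma coeff_gp: "coeff (gp a b c a' b' c' n) k = gkp a b c a' b' c' n (int k)"
  by (auto simp: gp_def coeff_sum gkp_out)

lemma poly_gp: "poly (gp a b c a' b' c' n) t = gkp_row a b c a' b' c' n t"
  by (simp add: gp_def gkp_row_def poly_sum poly_monom atLeast0AtMost)

lemma gp_0: "gp a b c a' b' c' 0 = 1"
  by (simp add: gp_def)

lemma gp_Suc: "gp a b c a' (-b) c' (Suc n) =
   [:a * of_nat n + c, a' * of_nat n + c':] * gp a b c a' (-b) c' n
   + smult b ([:0,1,-1:] * pderiv (gp a b c a' (-b) c' n))"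
proof (rule poly_eqI)
  fix k
  let ?T = "\<lambda>k. gkp a b c a' (-b) c' n k"
  have e1: "[:a * of_nat n + c, a' * of_nat n + c':] * p = smult (a * of_nat n + c) p + pCons 0 (smult (a' * of_nat n + c') p)" for p :: "complex poly"
    by (simp add: mult_pCons_left)
  have e2: "[:0,1,-1:] * p = pCons 0 (p + pCons 0 (smult (-1) p))" for p :: "complex poly"
    by (simp add: mult_pCons_left)
  show "coeff (gp a b c a' (-b) c' (Suc n)) k = coeff ([:a * of_nat n + c, a' * of_nat n + c':] * gp a b c a' (-b) c' n
   + smult b ([:0,1,-1:] * pderiv (gp a b c a' (-b) c' n))) k"
  proof (cases k)
    case 0
    then show ?thesis by (simp add: e1 e2 coeff_gp gkp_Suc' gkp_out algebra_simps)
  next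
    case (Suc m)
    show ?thesis
    proof (cases m)
      case 0
      then show ?thesis using Suc by (simp add: e1 e2 coeff_gp gkp_Suc' coeff_pderiv algebra_simps del: gkp.simps(2))
    next
      case (Suc j)
      then show ?thesis using \<open>k = Suc m\<close> by (simp add: e1 e2 coeff_gp gkp_Suc' coeff_pderiv algebra_simps del: gkp.simps(2))
    qed
  qed
qed

lemma RT_coeff: "gkp (a' - b) b c' (a + b) (-b) c n k = gkp a b c a' (-b) c' n (int n - k)"
proof (induction n arbitrary: k)
  case 0
  then show ?case by simp
next
  case (Suc n)
  have "int (Suc n) - k = int n - (k - 1)" by simp
  have h: "int (Suc n) - k - 1 = int n - k" by simp
  show ?case
    by (simp add: gkp_Suc' Suc.IH algebra_simps del: gkp.simps(2))
qed

lemma RT_row: assumes "t \<noteq> 0"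
  shows "gkp_row (a' - b) b c' (a + b) (-b) c n t = t ^ n * gkp_row a b c a' (-b) c' n (1 / t)"
proof -
  have "gkp_row (a' - b) b c' (a + b) (-b) c n t = (\<Sum>k=0..n. gkp a b c a' (-b) c' n (int (n - k)) * t ^ k)"
    unfolding gkp_row_def RT_coeff by (intro sum.cong) auto
  also have "\<dots> = (\<Sum>k=0..n. gkp a b c a' (-b) c' n (int k) * t ^ (n - k))"
    by (subst sum.atLeastAtMost_rev[of _ 0 n, simplified]) (intro sum.cong, auto)
  also have "\<dots> = t ^ n * gkp_row a b c a' (-b) c' n (1 / t)"
    unfolding gkp_row_def sum_distrib_left
    by (intro sum.cong) (auto simp: assms power_diff field_simps)
  finally show ?thesis .
qed

lemma UBT_poly: "gp (-a-a') b (-c-c') a' (-b) c' n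
   = smult ((-1)^n) (pcompose (gp a b c a' (-b) c' n) [:1,-1:])"
proof (induction n)
  case 0
  then show ?case by (simp add: gp_0 one_pCons)
next
  case (Suc n)
  define P where "P = gp a b c a' (-b) c' n"
  have dq: "poly (pderiv (smult ((-1)^n) (pcompose P [:1,-1:]))) x = - ((-1)^n * poly (pderiv P) (1 - x))" for x
    by (simp add: pderiv_smult pderiv_pcompose poly_pcompose pderiv_pCons)
  show ?case
    unfolding gp_Suc Suc.IH P_def[symmetric]
  proof (subst poly_eq_poly_eq_iff[symmetric], rule ext)
    fix x
    show "poly ([:(- a - a') * of_nat n + (- c - c'), a' * of_nat n + c':] * smult ((- 1) ^ n) (P \<circ>\<^sub>p [:1, - 1:]) +
          smult b ([:0, 1, - 1:] * pderiv (smult ((- 1) ^ n) (P \<circ>\<^sub>p [:1, - 1:])))) x =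
          poly (smult ((- 1) ^ Suc n) (([:a * of_nat n + c, a' * of_nat n + c':] * P + smult b ([:0, 1, - 1:] * pderiv P)) \<circ>\<^sub>p [:1, - 1:])) x"
      by (simp add: dq poly_pcompose algebra_simps)
  qed
qed

lemma UBT_row: "gkp_row (-a-a') b (-c-c') a' (-b) c' n t = (-1)^n * gkp_row a b c a' (-b) c' n (1 - t)"
  by (simp add: poly_gp[symmetric] UBT_poly poly_pcompose)

lemma pc_pow: "pcompose ([:0,1:]^j) q = q ^ j"
  for q :: "complex poly"
  by (induction j) (simp_all add: pcompose_mult pcompose_pCons one_pCons)

lemma coeff_lin_pow: "coeff ([:1,-1:]^j) k = of_nat (j choose k) * (-1 :: complex)^k"
proof (induction j arbitrary: k)
  case 0
  then show ?case by (cases k) auto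
next
  case (Suc j)
  have e: "[:1,-1:]^Suc j = [:1,-1:]^j + pCons 0 (smult (-1) ([:1,-1:]^j))"
    by (simp add: mult_pCons_left)
  show ?case
    by (cases k) (simp_all add: e Suc.IH algebra_simps)
qed

lemma UBT_coeff: assumes "k \<le> n"
  shows "gkp (-a-a') b (-c-c') a' (-b) c' n (int k) = (- 1) ^ (n - k) *
         (\<Sum>j=k..n. of_nat (j choose k) * gkp a b c a' (-b) c' n (int j))"
proof -
  let ?T = "\<lambda>j. gkp a b c a' (-b) c' n (int j)"
  have pc: "pcompose (gp a b c a' (-b) c' n) [:1,-1:] = (\<Sum>j\<le>n. smult (?T j) ([:1,-1:]^j))"
    by (simp add: gp_def pcompose_sum monom_altdef pcompose_smult pc_pow)
  have "gkp (-a-a') b (-c-c') a' (-b) c' n (int k) = coeff (gp (-a-a') b (-c-c') a' (-b) c' n) k"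
    by (simp add: coeff_gp)
  also have "\<dots> = (-1)^n * (\<Sum>j\<le>n. ?T j * (of_nat (j choose k) * (-1)^k))"
    by (simp add: UBT_poly pc coeff_sum coeff_lin_pow)
  also have "(\<Sum>j\<le>n. ?T j * (of_nat (j choose k) * (-1)^k)) = (-1)^k * (\<Sum>j=k..n. of_nat (j choose k) * ?T j)"
  proof -
    have "(\<Sum>j\<le>n. ?T j * (of_nat (j choose k) * (-1)^k)) = (\<Sum>j=k..n. ?T j * (of_nat (j choose k) * (-1)^k))"
      by (rule sum.mono_neutral_right) auto
    then show ?thesis by (simp add: sum_distrib_left algebra_simps)
  qed
  also have "(-1)^n * ((-1)^k * S) = (-1)^(n-k) * (S::complex)" for S
  proof -
    have "(-1::complex)^n = (-1)^(n-k) * (-1)^k" using assms by (simp flip: power_add)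
    moreover have "(-1::complex)^k * (-1)^k = 1" by (simp flip: power_mult_distrib)
    ultimately show ?thesis by (simp add: mult.assoc)
  qed
  finally show ?thesis .
qed



definition vec :: "params \<Rightarrow> nat \<Rightarrow> complex \<times> complex" where
  "vec q i = (case q of (a,b,c,a',c') \<Rightarrow>
     if i = 0 then (a,c) else if i = 1 then (a' - b, c') else (-a-a', -c-c'))"

definition Pf :: "(params \<Rightarrow> params) \<Rightarrow> (nat \<Rightarrow> nat) \<Rightarrow> bool" where
  "Pf f \<sigma> \<longleftrightarrow> \<sigma> permutes {0,1,2} \<and>
     (\<forall>q. fst (snd (f q)) = fst (snd q) \<and> (\<forall>i\<in>{0,1,2}. vec (f q) (\<sigma> i) = vec q i))"

lemma PfD: "Pf f \<sigma> \<Longrightarrow> \<sigma> permutes {0,1,2}"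
  "Pf f \<sigma> \<Longrightarrow> fst (snd (f q)) = fst (snd q)"
  "Pf f \<sigma> \<Longrightarrow> i \<in> {0,1,2} \<Longrightarrow> vec (f q) (\<sigma> i) = vec q i"
  unfolding Pf_def by blast+

lemma Pf_RT: "Pf RT_map (transpose 0 1)"
  unfolding Pf_def
  by (auto simp: permutes_swap_id RT_map_def vec_def split: prod.splits)

lemma Pf_UBT: "Pf UBT_map (transpose 0 2)"
  unfolding Pf_def
  by (auto simp: permutes_swap_id UBT_map_def vec_def split: prod.splits)

lemma Pf_id: "Pf id id"
  unfolding Pf_def by (auto simp: permutes_id)

lemma Pf_comp: assumes "Pf f \<sigma>" "Pf g \<tau>" shows "Pf (f \<circ> g) (\<sigma> \<circ> \<tau>)"
proof -
  have ps: "\<sigma> permutes {0,1,2}" and pt: "\<tau> permutes {0,1,2}"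
    and hf: "\<And>q. fst (snd (f q)) = fst (snd q)" "\<And>q i. i\<in>{0,1,2} \<Longrightarrow> vec (f q) (\<sigma> i) = vec q i"
    and hg: "\<And>q. fst (snd (g q)) = fst (snd q)" "\<And>q i. i\<in>{0,1,2} \<Longrightarrow> vec (g q) (\<tau> i) = vec q i"
    using PfD[OF assms(1)] PfD[OF assms(2)] by auto
  show ?thesis unfolding Pf_def
  proof (intro conjI allI ballI)
    show "\<sigma> \<circ> \<tau> permutes {0,1,2}" using permutes_compose[OF pt ps] .
    fix q show "fst (snd ((f \<circ> g) q)) = fst (snd q)" using hf hg by simp
  next
    fix q i assume i: "i \<in> {0::nat,1,2}"
    have "\<tau> i \<in> {0,1,2}" using permutes_in_image[OF pt] i by metis
    then show "vec ((f \<circ> g) q) ((\<sigma> \<circ> \<tau>) i) = vec q i" using hf(2) hg(2) i by simp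
  qed
qed

lemma gen_Pf: "f \<in> generated {RT_map, UBT_map} \<Longrightarrow> \<exists>\<sigma>. Pf f \<sigma>"
proof (induction rule: generated.induct)
  case gen_id
  then show ?case using Pf_id by blast
next
  case (gen_comp f g)
  then obtain \<tau> where "Pf g \<tau>" by blast
  from gen_comp.hyps(1) obtain \<sigma> where "Pf f \<sigma>" using Pf_RT Pf_UBT by blast
  then show ?case using Pf_comp \<open>Pf g \<tau>\<close> by blast
qed

definition q0 :: params where "q0 = (0, -3, 0, -2, 0)"

lemma vec_q0_inj: "i \<in> {0,1,2} \<Longrightarrow> j \<in> {0,1,2} \<Longrightarrow> vec q0 i = vec q0 j \<Longrightarrow> i = j"
  by (auto simp: vec_def q0_def)

lemma Pf_unique: assumes "Pf f \<sigma>" "Pf f \<tau>" shows "\<sigma> = \<tau>"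
proof
  fix i
  show "\<sigma> i = \<tau> i"
  proof (cases "i \<in> {0,1,2}")
    case False
    then show ?thesis using permutes_not_in[OF PfD(1)[OF assms(1)]] permutes_not_in[OF PfD(1)[OF assms(2)]] by simp
  next
    case True
    have ps: "\<sigma> permutes {0,1,2}" and pt: "\<tau> permutes {0,1,2}" using PfD(1) assms by auto
    have "\<tau> i \<in> {0,1,2}" using permutes_in_image[OF pt] True by metis
    then have "\<tau> i \<in> \<sigma> ` {0,1,2}" using permutes_image[OF ps] by simp
    then obtain i' where i': "i' \<in> {0,1,2}" "\<tau> i = \<sigma> i'" by blast
    have "vec q0 i' = vec (f q0) (\<sigma> i')" using PfD(3)[OF assms(1) i'(1)] by simp
    also have "\<dots> = vec (f q0) (\<tau> i)" using i' by simp
    also have "\<dots> = vec q0 i" using PfD(3)[OF assms(2) True] by simp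
    finally have "i' = i" by (rule vec_q0_inj[OF i'(1) True])
    then show ?thesis using i' by simp
  qed
qed

lemma vec_eq: assumes "fst (snd p) = fst (snd q)" "vec p 0 = vec q 0" "vec p 1 = vec q 1"
  shows "p = q"
proof -
  obtain a b c a' c' where p: "p = (a,b,c,a',c')" by (cases p) auto
  obtain a2 b2 c2 a2' c2' where q: "q = (a2,b2,c2,a2',c2')" by (cases q) auto
  show ?thesis using assms unfolding p q vec_def by auto
qed

lemma Pf_inj: assumes "Pf f \<sigma>" "Pf g \<sigma>" shows "f = g"
proof
  fix q
  have ps: "\<sigma> permutes {0,1,2}" using PfD(1) assms by auto
  have surj: "\<exists>i\<in>{0,1,2}. \<sigma> i = j" if "j \<in> {0,1,2}" for j
  proof -
    have "j \<in> \<sigma> ` {0,1,2}" by (simp only: permutes_image[OF ps] that)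
    then show ?thesis by (rule imageE) auto
  qed
  have "vec (f q) j = vec (g q) j" if j: "j \<in> {0,1,2}" for j
  proof -
    obtain i where i: "i \<in> {0,1,2}" "\<sigma> i = j" using surj[OF j] by blast
    show ?thesis using PfD(3)[OF assms(1) i(1), of q] PfD(3)[OF assms(2) i(1), of q] i(2) by simp
  qed
  moreover have "fst (snd (f q)) = fst (snd (g q))" using PfD(2)[OF assms(1)] PfD(2)[OF assms(2)] by simp
  ultimately show "f q = g q" by (intro vec_eq) auto
qed

theorem mainTheorem3:
  fixes \<alpha> \<beta> \<gamma> \<alpha>' \<gamma>' :: complex
  shows
   "(\<forall>n k::nat. k \<le> n \<longrightarrow>
       gkp (\<alpha>' - \<beta>) \<beta> \<gamma>' (\<alpha> + \<beta>) (- \<beta>) \<gamma> n (int k)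
       = gkp \<alpha> \<beta> \<gamma> \<alpha>' (- \<beta>) \<gamma>' n (int (n - k)))
  \<and> (\<forall>n t. t \<noteq> 0 \<longrightarrow>
       gkp_row (\<alpha>' - \<beta>) \<beta> \<gamma>' (\<alpha> + \<beta>) (- \<beta>) \<gamma> n t
       = t ^ n * gkp_row \<alpha> \<beta> \<gamma> \<alpha>' (- \<beta>) \<gamma>' n (1 / t))
  \<and> (\<forall>n k::nat. k \<le> n \<longrightarrow>
       gkp (- \<alpha> - \<alpha>') \<beta> (- \<gamma> - \<gamma>') \<alpha>' (- \<beta>) \<gamma>' n (int k)
       = (- 1) ^ (n - k) *
         (\<Sum>j=k..n. of_nat (j choose k) * gkp \<alpha> \<beta> \<gamma> \<alpha>' (- \<beta>) \<gamma>' n (int j)))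
  \<and> (\<forall>n t.
       gkp_row (- \<alpha> - \<alpha>') \<beta> (- \<gamma> - \<gamma>') \<alpha>' (- \<beta>) \<gamma>' n t
       = (- 1) ^ n * gkp_row \<alpha> \<beta> \<gamma> \<alpha>' (- \<beta>) \<gamma>' n (1 - t))
  \<and> (\<forall>t. t \<noteq> 0 \<longrightarrow>
       gkp_egf (\<alpha>' - \<beta>) \<beta> \<gamma>' (\<alpha> + \<beta>) (- \<beta>) \<gamma> t
       = gkp_egf \<alpha> \<beta> \<gamma> \<alpha>' (- \<beta>) \<gamma>' (1 / t) oo (fps_const t * fps_X))
  \<and> (\<forall>t.
       gkp_egf (- \<alpha> - \<alpha>') \<beta> (- \<gamma> - \<gamma>') \<alpha>' (- \<beta>) \<gamma>' t
       = gkp_egf \<alpha> \<beta> \<gamma> \<alpha>' (- \<beta>) \<gamma>' (1 - t) oo (- fps_X))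
  \<and> RT_map \<circ> RT_map = id \<and> UBT_map \<circ> UBT_map = id
  \<and> (\<forall>p \<in> generated {RT_map, UBT_map}. \<forall>q. fst (snd (p q)) = fst (snd q))
  \<and> card (generated {RT_map, UBT_map}) = 6
  \<and> (\<exists>\<phi>. bij_betw \<phi> (generated {RT_map, UBT_map}) {\<sigma>. \<sigma> permutes {0::nat, 1, 2}}
        \<and> (\<forall>f \<in> generated {RT_map, UBT_map}. \<forall>g \<in> generated {RT_map, UBT_map}.
             \<phi> (f \<circ> g) = \<phi> f \<circ> \<phi> g))"
  proof -
  let ?G = "generated {RT_map, UBT_map}"
  let ?S3 = "{\<sigma>. \<sigma> permutes {0::nat, 1, 2}}"
  define \<phi> where "\<phi> f = (THE \<sigma>. Pf f \<sigma>)" for f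
  have phiP: "Pf f (\<phi> f)" if fG: "f \<in> ?G" for f
  proof -
    obtain \<sigma> where s: "Pf f \<sigma>" using gen_Pf[OF fG] by blast
    show ?thesis unfolding \<phi>_def by (rule theI[where P="Pf f", OF s]) (erule Pf_unique[OF _ s])
  qed
  have hom: "\<phi> (f \<circ> g) = \<phi> f \<circ> \<phi> g" if "f \<in> ?G" "g \<in> ?G" for f g
  proof -
    have s: "Pf (f \<circ> g) (\<phi> f \<circ> \<phi> g)" using Pf_comp phiP that by blast
    show ?thesis unfolding \<phi>_def[of "f \<circ> g"] by (rule the_equality[where P="Pf (f \<circ> g)", OF s]) (erule Pf_unique[OF _ s])
  qed
  have inj: "inj_on \<phi> ?G"
    by (rule inj_onI) (metis Pf_inj phiP)
  have sub: "\<phi> ` ?G \<subseteq> ?S3" using phiP PfD(1) by blast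
  have finS3: "finite ?S3" by (rule finite_permutations) simp
  have cardS3: "card ?S3 = 6" by (subst card_permutations[of _ 3]) (simp_all add: fact_numeral)
  have finG: "finite ?G" using finite_subset[OF sub finS3] inj finite_imageD by blast
  have le: "card ?G \<le> 6" using card_inj_on_le[OF inj sub finS3] cardS3 by simp
  define q1 :: params where "q1 = (1, 0, 0, 2, 0)"
  have L6: "{id, RT_map, UBT_map, RT_map \<circ> UBT_map, UBT_map \<circ> RT_map, RT_map \<circ> (UBT_map \<circ> RT_map)} \<subseteq> ?G"
    by (auto intro!: generated.intros simp del: comp_apply)
     (metis comp_id generated.intros insertI1 insertI2)+
  have img: "(\<lambda>f. f q1) ` {id, RT_map, UBT_map, RT_map \<circ> UBT_map, UBT_map \<circ> RT_map, RT_map \<circ> (UBT_map \<circ> RT_map)}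
     = {(1,0,0,2,0), (2,0,0,1,0), (-3,0,0,2,0), (2,0,0,-3,0), (-3,0,0,1,0), (1,0,0,-3,0)}"
    by (simp add: q1_def RT_map_def UBT_map_def)
  have c6: "card {(1::complex,0::complex,0::complex,2::complex,0::complex), (2,0,0,1,0), (-3,0,0,2,0), (2,0,0,-3,0), (-3,0,0,1,0), (1,0,0,-3,0)} = 6"
    by simp
  have m: "card ((\<lambda>f. f q1) ` {id, RT_map, UBT_map, RT_map \<circ> UBT_map, UBT_map \<circ> RT_map, RT_map \<circ> (UBT_map \<circ> RT_map)}) \<le> card ((\<lambda>f. f q1) ` ?G)"
    by (rule card_mono[OF finite_imageI[OF finG] image_mono[OF L6]])
  have "6 \<le> card ((\<lambda>f. f q1) ` ?G)" using m unfolding img c6 .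
  also have "\<dots> \<le> card ?G" by (rule card_image_le[OF finG])
  finally have cardG: "card ?G = 6" using le by simp
  have bij: "bij_betw \<phi> ?G ?S3"
    unfolding bij_betw_def
    using inj sub card_subset_eq[OF finS3 sub] card_image[OF inj] cardG cardS3 by simp
  have RT2: "RT_map \<circ> RT_map = id" by (auto simp: RT_map_def)
  have UBT2: "UBT_map \<circ> UBT_map = id" by (auto simp: UBT_map_def)
  have pres: "\<forall>p \<in> ?G. \<forall>q. fst (snd (p q)) = fst (snd q)"
    using gen_Pf PfD(2) by blast
  have egf1: "gkp_egf (\<alpha>' - \<beta>) \<beta> \<gamma>' (\<alpha> + \<beta>) (- \<beta>) \<gamma> t
       = gkp_egf \<alpha> \<beta> \<gamma> \<alpha>' (- \<beta>) \<gamma>' (1 / t) oo (fps_const t * fps_X)" if "t \<noteq> 0" for t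
    unfolding gkp_egf_def fps_compose_linear
    by (simp add: RT_row[OF that])
  have egf2: "gkp_egf (- \<alpha> - \<alpha>') \<beta> (- \<gamma> - \<gamma>') \<alpha>' (- \<beta>) \<gamma>' t
       = gkp_egf \<alpha> \<beta> \<gamma> \<alpha>' (- \<beta>) \<gamma>' (1 - t) oo (- fps_X)" for t
    unfolding gkp_egf_def fps_compose_uminus'
    by (simp add: UBT_row)
  have rt1: "\<forall>n k::nat. k \<le> n \<longrightarrow>
       gkp (\<alpha>' - \<beta>) \<beta> \<gamma>' (\<alpha> + \<beta>) (- \<beta>) \<gamma> n (int k)
       = gkp \<alpha> \<beta> \<gamma> \<alpha>' (- \<beta>) \<gamma>' n (int (n - k))"
    by (simp add: RT_coeff of_nat_diff)
  show ?thesis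
  proof (intro conjI)
    show "\<forall>n t. t \<noteq> 0 \<longrightarrow>
       gkp_row (\<alpha>' - \<beta>) \<beta> \<gamma>' (\<alpha> + \<beta>) (- \<beta>) \<gamma> n t
       = t ^ n * gkp_row \<alpha> \<beta> \<gamma> \<alpha>' (- \<beta>) \<gamma>' n (1 / t)"
      using RT_row by blast
    show "\<forall>n k::nat. k \<le> n \<longrightarrow>
       gkp (- \<alpha> - \<alpha>') \<beta> (- \<gamma> - \<gamma>') \<alpha>' (- \<beta>) \<gamma>' n (int k)
       = (- 1) ^ (n - k) *
         (\<Sum>j=k..n. of_nat (j choose k) * gkp \<alpha> \<beta> \<gamma> \<alpha>' (- \<beta>) \<gamma>' n (int j))"
      using UBT_coeff by blast
    show "\<forall>n t.
       gkp_row (- \<alpha> - \<alpha>') \<beta> (- \<gamma> - \<gamma>') \<alpha>' (- \<beta>) \<gamma>' n t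
       = (- 1) ^ n * gkp_row \<alpha> \<beta> \<gamma> \<alpha>' (- \<beta>) \<gamma>' n (1 - t)"
      using UBT_row by blast
    show "\<exists>\<phi>. bij_betw \<phi> ?G ?S3 \<and> (\<forall>f \<in> ?G. \<forall>g \<in> ?G. \<phi> (f \<circ> g) = \<phi> f \<circ> \<phi> g)"
      using bij hom by blast
  qed (use rt1 egf1 egf2 RT2 UBT2 pres cardG in blast)+
qed

end
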